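(* Let $\mathcal{N}$ denote the non-classicality of a temporal KD distribution. Fix the channels $\mathcal{E}_{t_j\leftarrow t_{j-1}}$ and the measurements, and regard the right temporal KD distribution $\overrightarrow{Q}_{\rm KD}[\rho_{t_0}]$ as a function of the initial density operator. Then for all density operators $\rho_{t_0},\omega_{t_0}$ and $\lambda\in[0,1]$, $$\mathcal{N}\big[\overrightarrow{Q}_{\rm KD}[\lambda\rho_{t_0}+(1-\lambda)\omega_{t_0}]\big]\le\lambda\,\mathcal{N}\big[\overrightarrow{Q}_{\rm KD}[\rho_{t_0}]\big]+(1-\lambda)\,\mathcal{N}\big[\overrightarrow{Q}_{\rm KD}[\omega_{t_0}]\big].$$ The same holds for the left and doubled temporal KD distributions.
   Context: A multi-time quantum process $(\rho_{t_0},\mathcal{E}_{t_1\leftarrow t_0},\dots,\mathcal{E}_{t_n\leftarrow t_{n-1}})$ consists of a density operator and CPTP maps on finite-dimensional spaces, extended linearly to all operators; complete families of orthogonal projectors are fixed at each time. $\overrightarrow{Q}_{\rm KD}(b_n,\dots,b_0)=\operatorname{Tr}[\mathcal{E}_{t_n\leftarrow t_{n-1}}(\cdots\mathcal{E}_{t_1\leftarrow t_0}(\rho_{t_0}\Pi^{t_0}_{b_0})\Pi^{t_1}_{b_1}\cdots)\Pi^{t_n}_{b_n}]$; $\overleftarrow{Q}_{\rm KD}(a_n,\dots,a_0)=\operatorname{Tr}[\Pi^{t_n}_{a_n}\mathcal{E}_{t_n\leftarrow t_{n-1}}(\cdots\Pi^{t_1}_{a_1}\mathcal{E}_{t_1\leftarrow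 t_0}(\Pi^{t_0}_{a_0}\rho_{t_0})\cdots)]$; $\overleftrightarrow{Q}_{\rm KD}(a;b)=\operatorname{Tr}[\Pi^{t_n}_{a_n}\mathcal{E}_{t_n\leftarrow t_{n-1}}(\cdots\Pi^{t_1}_{a_1}\mathcal{E}_{t_1\leftarrow t_0}(\Pi^{t_0}_{a_0}\rho_{t_0}\Pi^{t_0}_{b_0})\Pi^{t_1}_{b_1}\cdots)\Pi^{t_n}_{b_n}]$. For any such (complex-valued) distribution $Q$, $\mathcal{N}[Q]=\sum_{\text{all outcomes}}|Q|-1$. *)

theory Defs
  imports "Jordan_Normal_Form.Matrix"
begin

definition mtrace :: "complex mat \<Rightarrow> complex" where
  "mtrace A = (\<Sum>i<dim_row A. A $$ (i,i))"

definition hermitian_op :: "nat \<Rightarrow> complex mat \<Rightarrow> bool" where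
  "hermitian_op d A \<longleftrightarrow> A \<in> carrier_mat d d \<and>
     (\<forall>i<d. \<forall>j<d. A $$ (i,j) = cnj (A $$ (j,i)))"

definition psd :: "nat \<Rightarrow> complex mat \<Rightarrow> bool" where
  "psd d A \<longleftrightarrow> hermitian_op d A \<and>
     (\<forall>v\<in>carrier_vec d. \<exists>r::real. r \<ge> 0 \<and>
        (\<Sum>i<d. \<Sum>j<d. cnj (v $ i) * A $$ (i,j) * v $ j) = complex_of_real r)"

definition density_op :: "nat \<Rightarrow> complex mat \<Rightarrow> bool" where
  "density_op d \<rho> \<longleftrightarrow> psd d \<rho> \<and> mtrace \<rho> = 1"

definition mat_unit :: "nat \<Rightarrow> nat \<Rightarrow> nat \<Rightarrow> complex mat" where
  "mat_unit d i j = mat d d (\<lambda>(r,s). if r = i \<and> s = j then 1 else 0)"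

definition linear_op_map :: "nat \<Rightarrow> nat \<Rightarrow> (complex mat \<Rightarrow> complex mat) \<Rightarrow> bool" where
  "linear_op_map d1 d2 E \<longleftrightarrow>
     (\<forall>A\<in>carrier_mat d1 d1. E A \<in> carrier_mat d2 d2) \<and>
     (\<forall>A\<in>carrier_mat d1 d1. \<forall>B\<in>carrier_mat d1 d1. E (A + B) = E A + E B) \<and>
     (\<forall>A\<in>carrier_mat d1 d1. \<forall>c. E (c \<cdot>\<^sub>m A) = c \<cdot>\<^sub>m E A)"

text \<open>Choi matrix  sum_{ij} |i><j| (tensor) E(|i><j|), index (i,k) encoded as i*d2+k.\<close>
definition choi :: "nat \<Rightarrow> nat \<Rightarrow> (complex mat \<Rightarrow> complex mat) \<Rightarrow> complex mat" where
  "choi d1 d2 E = mat (d1*d2) (d1*d2)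
     (\<lambda>(p,q). (E (mat_unit d1 (p div d2) (q div d2))) $$ (p mod d2, q mod d2))"

definition CPTP :: "nat \<Rightarrow> nat \<Rightarrow> (complex mat \<Rightarrow> complex mat) \<Rightarrow> bool" where
  "CPTP d1 d2 E \<longleftrightarrow> linear_op_map d1 d2 E \<and>
     psd (d1*d2) (choi d1 d2 E) \<and>
     (\<forall>A\<in>carrier_mat d1 d1. mtrace (E A) = mtrace A)"

definition proj_family :: "nat \<Rightarrow> 'b set \<Rightarrow> ('b \<Rightarrow> complex mat) \<Rightarrow> bool" where
  "proj_family d B P \<longleftrightarrow> finite B \<and>
     (\<forall>b\<in>B. hermitian_op d (P b) \<and> P b * P b = P b) \<and>
     (\<forall>a\<in>B. \<forall>b\<in>B. a \<noteq> b \<longrightarrow> P a * P b = 0\<^sub>m d d) \<and>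
     (\<forall>i<d. \<forall>j<d. (\<Sum>b\<in>B. P b $$ (i,j)) = (1\<^sub>m d :: complex mat) $$ (i,j))"

definition process_setting ::
  "nat \<Rightarrow> (nat \<Rightarrow> nat) \<Rightarrow> (nat \<Rightarrow> complex mat \<Rightarrow> complex mat) \<Rightarrow>
   (nat \<Rightarrow> 'b set) \<Rightarrow> (nat \<Rightarrow> 'b \<Rightarrow> complex mat) \<Rightarrow> bool" where
  "process_setting n d E B P \<longleftrightarrow>
     (\<forall>j\<in>{1..n}. CPTP (d (j - 1)) (d j) (E j)) \<and>
     (\<forall>j\<le>n. proj_family (d j) (B j) (P j))"

text \<open>Outcome strings (b_0,...,b_n) as functions on {0..n}.\<close>
definition outcomes :: "nat \<Rightarrow> (nat \<Rightarrow> 'b set) \<Rightarrow> (nat \<Rightarrow> 'b) set" where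
  "outcomes n B = PiE {0..n} B"

fun right_op ::
  "(nat \<Rightarrow> complex mat \<Rightarrow> complex mat) \<Rightarrow> (nat \<Rightarrow> 'b \<Rightarrow> complex mat) \<Rightarrow>
   complex mat \<Rightarrow> (nat \<Rightarrow> 'b) \<Rightarrow> nat \<Rightarrow> complex mat" where
  "right_op E P \<rho> b 0 = \<rho> * P 0 (b 0)"
| "right_op E P \<rho> b (Suc j) = E (Suc j) (right_op E P \<rho> b j) * P (Suc j) (b (Suc j))"

fun left_op ::
  "(nat \<Rightarrow> complex mat \<Rightarrow> complex mat) \<Rightarrow> (nat \<Rightarrow> 'b \<Rightarrow> complex mat) \<Rightarrow>
   complex mat \<Rightarrow> (nat \<Rightarrow> 'b) \<Rightarrow> nat \<Rightarrow> complex mat" where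
  "left_op E P \<rho> a 0 = P 0 (a 0) * \<rho>"
| "left_op E P \<rho> a (Suc j) = P (Suc j) (a (Suc j)) * E (Suc j) (left_op E P \<rho> a j)"

fun doubled_op ::
  "(nat \<Rightarrow> complex mat \<Rightarrow> complex mat) \<Rightarrow> (nat \<Rightarrow> 'b \<Rightarrow> complex mat) \<Rightarrow>
   complex mat \<Rightarrow> (nat \<Rightarrow> 'b) \<Rightarrow> (nat \<Rightarrow> 'b) \<Rightarrow> nat \<Rightarrow> complex mat" where
  "doubled_op E P \<rho> a b 0 = P 0 (a 0) * \<rho> * P 0 (b 0)"
| "doubled_op E P \<rho> a b (Suc j) =
     P (Suc j) (a (Suc j)) * E (Suc j) (doubled_op E P \<rho> a b j) * P (Suc j) (b (Suc j))"

definition Q_right where "Q_right n E P \<rho> b = mtrace (right_op E P \<rho> b n)"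
definition Q_left where "Q_left n E P \<rho> a = mtrace (left_op E P \<rho> a n)"
definition Q_doubled where "Q_doubled n E P \<rho> ab = mtrace (doubled_op E P \<rho> (fst ab) (snd ab) n)"

definition nonclass :: "'o set \<Rightarrow> ('o \<Rightarrow> complex) \<Rightarrow> real" where
  "nonclass S Q = (\<Sum>x\<in>S. cmod (Q x)) - 1"

end

theory Submission
  imports Defs
begin

lemma nonclass_convex:
  fixes lam :: real
  assumes "finite S" "0 \<le> lam" "lam \<le> 1"
    and "\<And>x. x \<in> S \<Longrightarrow> Qs x = complex_of_real lam * Qr x + complex_of_real (1 - lam) * Qw x"
  shows "nonclass S Qs \<le> lam * nonclass S Qr + (1 - lam) * nonclass S Qw"
proof -
  have "cmod (Qs x) \<le> lam * cmod (Qr x) + (1 - lam) * cmod (Qw x)" if "x \<in> S" for x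
  proof -
    have "cmod (Qs x) \<le> cmod (complex_of_real lam * Qr x) + cmod (complex_of_real (1 - lam) * Qw x)"
      using assms(4)[OF that] norm_triangle_ineq by metis
    also have "\<dots> = lam * cmod (Qr x) + (1 - lam) * cmod (Qw x)"
      using assms(2,3) by (simp only: norm_mult norm_of_real)
    finally show ?thesis .
  qed
  hence "(\<Sum>x\<in>S. cmod (Qs x)) \<le> (\<Sum>x\<in>S. lam * cmod (Qr x) + (1 - lam) * cmod (Qw x))"
    by (rule sum_mono)
  also have "\<dots> = lam * (\<Sum>x\<in>S. cmod (Qr x)) + (1 - lam) * (\<Sum>x\<in>S. cmod (Qw x))"
    by (simp add: sum.distrib sum_distrib_left)
  finally show ?thesis unfolding nonclass_def by (simp add: algebra_simps)
qed

lemma mtrace_lin: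
  assumes "A \<in> carrier_mat k k" "B \<in> carrier_mat k k"
  shows "mtrace (c1 \<cdot>\<^sub>m A + c2 \<cdot>\<^sub>m B) = c1 * mtrace A + c2 * mtrace B"
  using assms unfolding mtrace_def
  by (simp add: sum.distrib sum_distrib_left)

lemma E_lin:
  assumes "linear_op_map d1 d2 F" "A \<in> carrier_mat d1 d1" "B \<in> carrier_mat d1 d1"
  shows "F (c1 \<cdot>\<^sub>m A + c2 \<cdot>\<^sub>m B) = c1 \<cdot>\<^sub>m F A + c2 \<cdot>\<^sub>m F B"
  using assms unfolding linear_op_map_def by auto

lemma setting_facts:
  assumes "process_setting n d E B P"
  shows "\<And>j. j \<in> {1..n} \<Longrightarrow> linear_op_map (d (j - 1)) (d j) (E j)"
    and "\<And>j x. j \<le> n \<Longrightarrow> x \<in> B j \<Longrightarrow> P j x \<in> carrier_mat (d j) (d j)"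
    and "\<And>j. j \<le> n \<Longrightarrow> finite (B j)"
  using assms unfolding process_setting_def CPTP_def proj_family_def hermitian_op_def by auto

lemma lin_mult_right:
  fixes A B C :: "complex mat"
  assumes "A \<in> carrier_mat k k" "B \<in> carrier_mat k k" "C \<in> carrier_mat k k"
  shows "(c1 \<cdot>\<^sub>m A + c2 \<cdot>\<^sub>m B) * C = c1 \<cdot>\<^sub>m (A * C) + c2 \<cdot>\<^sub>m (B * C)"
proof -
  have "(c1 \<cdot>\<^sub>m A + c2 \<cdot>\<^sub>m B) * C = (c1 \<cdot>\<^sub>m A) * C + (c2 \<cdot>\<^sub>m B) * C"
    by (rule add_mult_distrib_mat[of _ k k], insert assms, auto)
  also have "\<dots> = c1 \<cdot>\<^sub>m (A * C) + c2 \<cdot>\<^sub>m (B * C)"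
    using mult_smult_assoc_mat[OF assms(1,3)] mult_smult_assoc_mat[OF assms(2,3)] by simp
  finally show ?thesis .
qed

lemma lin_mult_left:
  fixes A B C :: "complex mat"
  assumes "A \<in> carrier_mat k k" "B \<in> carrier_mat k k" "C \<in> carrier_mat k k"
  shows "C * (c1 \<cdot>\<^sub>m A + c2 \<cdot>\<^sub>m B) = c1 \<cdot>\<^sub>m (C * A) + c2 \<cdot>\<^sub>m (C * B)"
proof -
  have "C * (c1 \<cdot>\<^sub>m A + c2 \<cdot>\<^sub>m B) = C * (c1 \<cdot>\<^sub>m A) + C * (c2 \<cdot>\<^sub>m B)"
    by (rule mult_add_distrib_mat[of _ k k], insert assms, auto)
  also have "\<dots> = c1 \<cdot>\<^sub>m (C * A) + c2 \<cdot>\<^sub>m (C * B)"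
    using mult_smult_distrib[OF assms(3,1)] mult_smult_distrib[OF assms(3,2)] by simp
  finally show ?thesis .
qed

lemma right_lin:
  assumes ps: "process_setting n d E B P"
    and b: "b \<in> outcomes n B" and X: "X \<in> carrier_mat (d 0) (d 0)" and Y: "Y \<in> carrier_mat (d 0) (d 0)"
  shows "j \<le> n \<Longrightarrow> right_op E P X b j \<in> carrier_mat (d j) (d j) \<and>
     right_op E P Y b j \<in> carrier_mat (d j) (d j) \<and>
     right_op E P (c1 \<cdot>\<^sub>m X + c2 \<cdot>\<^sub>m Y) b j = c1 \<cdot>\<^sub>m right_op E P X b j + c2 \<cdot>\<^sub>m right_op E P Y b j"
proof (induction j)
  case 0
  have bj: "b 0 \<in> B 0" using b unfolding outcomes_def by auto
  have P: "P 0 (b 0) \<in> carrier_mat (d 0) (d 0)" using setting_facts(2)[OF ps _ bj] by simp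
  show ?case using X Y P lin_mult_right[OF X Y P] by simp
next
  case (Suc j)
  have bj: "b (Suc j) \<in> B (Suc j)" using b Suc.prems unfolding outcomes_def by auto
  have P: "P (Suc j) (b (Suc j)) \<in> carrier_mat (d (Suc j)) (d (Suc j))"
    using setting_facts(2)[OF ps Suc.prems bj] .
  have L: "linear_op_map (d j) (d (Suc j)) (E (Suc j))"
    using setting_facts(1)[OF ps, of "Suc j"] Suc.prems by simp
  from Suc.IH Suc.prems have IH: "right_op E P X b j \<in> carrier_mat (d j) (d j)"
     "right_op E P Y b j \<in> carrier_mat (d j) (d j)"
     "right_op E P (c1 \<cdot>\<^sub>m X + c2 \<cdot>\<^sub>m Y) b j = c1 \<cdot>\<^sub>m right_op E P X b j + c2 \<cdot>\<^sub>m right_op E P Y b j"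
    by auto
  have EX: "E (Suc j) (right_op E P X b j) \<in> carrier_mat (d (Suc j)) (d (Suc j))"
    and EY: "E (Suc j) (right_op E P Y b j) \<in> carrier_mat (d (Suc j)) (d (Suc j))"
    using L IH unfolding linear_op_map_def by auto
  show ?case using IH EX EY P E_lin[OF L IH(1,2)] lin_mult_right[OF EX EY P] by simp
qed

lemma left_lin:
  assumes ps: "process_setting n d E B P"
    and b: "b \<in> outcomes n B" and X: "X \<in> carrier_mat (d 0) (d 0)" and Y: "Y \<in> carrier_mat (d 0) (d 0)"
  shows "j \<le> n \<Longrightarrow> left_op E P X b j \<in> carrier_mat (d j) (d j) \<and>
     left_op E P Y b j \<in> carrier_mat (d j) (d j) \<and>
     left_op E P (c1 \<cdot>\<^sub>m X + c2 \<cdot>\<^sub>m Y) b j = c1 \<cdot>\<^sub>m left_op E P X b j + c2 \<cdot>\<^sub>m left_op E P Y b j"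
proof (induction j)
  case 0
  have bj: "b 0 \<in> B 0" using b unfolding outcomes_def by auto
  have P: "P 0 (b 0) \<in> carrier_mat (d 0) (d 0)" using setting_facts(2)[OF ps _ bj] by simp
  show ?case using X Y P lin_mult_left[OF X Y P] by simp
next
  case (Suc j)
  have bj: "b (Suc j) \<in> B (Suc j)" using b Suc.prems unfolding outcomes_def by auto
  have P: "P (Suc j) (b (Suc j)) \<in> carrier_mat (d (Suc j)) (d (Suc j))"
    using setting_facts(2)[OF ps Suc.prems bj] .
  have L: "linear_op_map (d j) (d (Suc j)) (E (Suc j))"
    using setting_facts(1)[OF ps, of "Suc j"] Suc.prems by simp
  from Suc.IH Suc.prems have IH: "left_op E P X b j \<in> carrier_mat (d j) (d j)"
     "left_op E P Y b j \<in> carrier_mat (d j) (d j)"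
     "left_op E P (c1 \<cdot>\<^sub>m X + c2 \<cdot>\<^sub>m Y) b j = c1 \<cdot>\<^sub>m left_op E P X b j + c2 \<cdot>\<^sub>m left_op E P Y b j"
    by auto
  have EX: "E (Suc j) (left_op E P X b j) \<in> carrier_mat (d (Suc j)) (d (Suc j))"
    and EY: "E (Suc j) (left_op E P Y b j) \<in> carrier_mat (d (Suc j)) (d (Suc j))"
    using L IH unfolding linear_op_map_def by auto
  show ?case using IH EX EY P E_lin[OF L IH(1,2)] lin_mult_left[OF EX EY P] by simp
qed

lemma doubled_lin:
  assumes ps: "process_setting n d E B P"
    and a: "a \<in> outcomes n B" and b: "b \<in> outcomes n B"
    and X: "X \<in> carrier_mat (d 0) (d 0)" and Y: "Y \<in> carrier_mat (d 0) (d 0)"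
  shows "j \<le> n \<Longrightarrow> doubled_op E P X a b j \<in> carrier_mat (d j) (d j) \<and>
     doubled_op E P Y a b j \<in> carrier_mat (d j) (d j) \<and>
     doubled_op E P (c1 \<cdot>\<^sub>m X + c2 \<cdot>\<^sub>m Y) a b j = c1 \<cdot>\<^sub>m doubled_op E P X a b j + c2 \<cdot>\<^sub>m doubled_op E P Y a b j"
proof (induction j)
  case 0
  have bj: "b 0 \<in> B 0" using b unfolding outcomes_def by auto
  have aj: "a 0 \<in> B 0" using a unfolding outcomes_def by auto
  have P: "P 0 (b 0) \<in> carrier_mat (d 0) (d 0)" using setting_facts(2)[OF ps _ bj] by simp
  have Pa: "P 0 (a 0) \<in> carrier_mat (d 0) (d 0)" using setting_facts(2)[OF ps _ aj] by simp
  have X': "P 0 (a 0) * X \<in> carrier_mat (d 0) (d 0)" and Y': "P 0 (a 0) * Y \<in> carrier_mat (d 0) (d 0)"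
    using X Y Pa by auto
  show ?case using X Y P Pa lin_mult_left[OF X Y Pa] lin_mult_right[OF X' Y' P] by simp
next
  case (Suc j)
  have bj: "b (Suc j) \<in> B (Suc j)" using b Suc.prems unfolding outcomes_def by auto
  have aj: "a (Suc j) \<in> B (Suc j)" using a Suc.prems unfolding outcomes_def by auto
  have P: "P (Suc j) (b (Suc j)) \<in> carrier_mat (d (Suc j)) (d (Suc j))"
    using setting_facts(2)[OF ps Suc.prems bj] .
  have Pa: "P (Suc j) (a (Suc j)) \<in> carrier_mat (d (Suc j)) (d (Suc j))"
    using setting_facts(2)[OF ps Suc.prems aj] .
  have L: "linear_op_map (d j) (d (Suc j)) (E (Suc j))"
    using setting_facts(1)[OF ps, of "Suc j"] Suc.prems by simp
  from Suc.IH Suc.prems have IH: "doubled_op E P X a b j \<in> carrier_mat (d j) (d j)"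
     "doubled_op E P Y a b j \<in> carrier_mat (d j) (d j)"
     "doubled_op E P (c1 \<cdot>\<^sub>m X + c2 \<cdot>\<^sub>m Y) a b j = c1 \<cdot>\<^sub>m doubled_op E P X a b j + c2 \<cdot>\<^sub>m doubled_op E P Y a b j"
    by auto
  have EX: "E (Suc j) (doubled_op E P X a b j) \<in> carrier_mat (d (Suc j)) (d (Suc j))"
    and EY: "E (Suc j) (doubled_op E P Y a b j) \<in> carrier_mat (d (Suc j)) (d (Suc j))"
    using L IH unfolding linear_op_map_def by auto
  have X': "P (Suc j) (a (Suc j)) * E (Suc j) (doubled_op E P X a b j) \<in> carrier_mat (d (Suc j)) (d (Suc j))"
    and Y': "P (Suc j) (a (Suc j)) * E (Suc j) (doubled_op E P Y a b j) \<in> carrier_mat (d (Suc j)) (d (Suc j))"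
    using EX EY Pa by auto
  show ?case using IH EX EY P Pa E_lin[OF L IH(1,2)] lin_mult_left[OF EX EY Pa] lin_mult_right[OF X' Y' P] by simp
qed

theorem mainTheorem7:
  fixes n :: nat and d :: "nat \<Rightarrow> nat"
    and E :: "nat \<Rightarrow> complex mat \<Rightarrow> complex mat"
    and B :: "nat \<Rightarrow> 'b set" and P :: "nat \<Rightarrow> 'b \<Rightarrow> complex mat"
    and \<rho> \<omega> :: "complex mat" and lam :: real
  assumes "process_setting n d E B P"
    and "density_op (d 0) \<rho>" and "density_op (d 0) \<omega>"
    and "0 \<le> lam" and "lam \<le> 1"
  defines "\<sigma> \<equiv> complex_of_real lam \<cdot>\<^sub>m \<rho> + complex_of_real (1 - lam) \<cdot>\<^sub>m \<omega>"
  shows "(nonclass (outcomes n B) (Q_right n E P \<sigma>)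
           \<le> lam * nonclass (outcomes n B) (Q_right n E P \<rho>)
             + (1 - lam) * nonclass (outcomes n B) (Q_right n E P \<omega>)) \<and>
         (nonclass (outcomes n B) (Q_left n E P \<sigma>)
           \<le> lam * nonclass (outcomes n B) (Q_left n E P \<rho>)
             + (1 - lam) * nonclass (outcomes n B) (Q_left n E P \<omega>)) \<and>
         (nonclass (outcomes n B \<times> outcomes n B) (Q_doubled n E P \<sigma>)
           \<le> lam * nonclass (outcomes n B \<times> outcomes n B) (Q_doubled n E P \<rho>)
             + (1 - lam) * nonclass (outcomes n B \<times> outcomes n B) (Q_doubled n E P \<omega>))"
proof -
  note ps = assms(1)
  have X: "\<rho> \<in> carrier_mat (d 0) (d 0)" and Y: "\<omega> \<in> carrier_mat (d 0) (d 0)"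
    using assms(2,3) unfolding density_op_def psd_def hermitian_op_def by auto
  have fin: "finite (outcomes n B)"
    unfolding outcomes_def using setting_facts(3)[OF ps] by (intro finite_PiE) auto
  show ?thesis
  proof (intro conjI)
    show "nonclass (outcomes n B) (Q_right n E P \<sigma>)
           \<le> lam * nonclass (outcomes n B) (Q_right n E P \<rho>)
             + (1 - lam) * nonclass (outcomes n B) (Q_right n E P \<omega>)"
    proof (rule nonclass_convex[OF fin assms(4,5)])
      fix b assume b: "b \<in> outcomes n B"
      from right_lin[OF ps b X Y order_refl, of "complex_of_real lam" "complex_of_real (1 - lam)"]
      show "Q_right n E P \<sigma> b = complex_of_real lam * Q_right n E P \<rho> b + complex_of_real (1 - lam) * Q_right n E P \<omega> b"
        unfolding Q_right_def \<sigma>_def using mtrace_lin by metis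
    qed
    show "nonclass (outcomes n B) (Q_left n E P \<sigma>)
           \<le> lam * nonclass (outcomes n B) (Q_left n E P \<rho>)
             + (1 - lam) * nonclass (outcomes n B) (Q_left n E P \<omega>)"
    proof (rule nonclass_convex[OF fin assms(4,5)])
      fix b assume b: "b \<in> outcomes n B"
      from left_lin[OF ps b X Y order_refl, of "complex_of_real lam" "complex_of_real (1 - lam)"]
      show "Q_left n E P \<sigma> b = complex_of_real lam * Q_left n E P \<rho> b + complex_of_real (1 - lam) * Q_left n E P \<omega> b"
        unfolding Q_left_def \<sigma>_def using mtrace_lin by metis
    qed
    show "nonclass (outcomes n B \<times> outcomes n B) (Q_doubled n E P \<sigma>)
           \<le> lam * nonclass (outcomes n B \<times> outcomes n B) (Q_doubled n E P \<rho>)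
             + (1 - lam) * nonclass (outcomes n B \<times> outcomes n B) (Q_doubled n E P \<omega>)"
    proof (rule nonclass_convex[OF _ assms(4,5)])
      show "finite (outcomes n B \<times> outcomes n B)" using fin by simp
      fix ab assume ab: "ab \<in> outcomes n B \<times> outcomes n B"
      then have a: "fst ab \<in> outcomes n B" and b: "snd ab \<in> outcomes n B" by auto
      from doubled_lin[OF ps a b X Y order_refl, of "complex_of_real lam" "complex_of_real (1 - lam)"]
      show "Q_doubled n E P \<sigma> ab = complex_of_real lam * Q_doubled n E P \<rho> ab + complex_of_real (1 - lam) * Q_doubled n E P \<omega> ab"
        unfolding Q_doubled_def \<sigma>_def using mtrace_lin by metis
    qed
  qed
qed

end
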